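(* Let $X\subseteq\mathbb{R}^d$ be compact, $\theta\in(0,1]$ and $0\leq s\leq d$. Then for all $0<r\leq1$ and every finite cover $\{U_i\}_i$ of $X$ by sets with $r\leq|U_i|\leq r^\theta$, \[ \sum_i|U_i|^s\ \geq\ r^s\,C_{r,\theta}^{s,d}(X). \]
   Context: $|U|$ denotes diameter. For $0\leq s\leq d$ and $0<r\leq1$, define on $\mathbb{R}^d$ the kernel $\phi_{r,\theta}^{s,d}(x)=1$ if $|x|<r$, $=(r/|x|)^s$ if $r\leq|x|<r^\theta$, and $=r^{\theta(d-s)+s}/|x|^d$ if $r^\theta\leq|x|$. For compact $X$, $C_{r,\theta}^{s,d}(X)=\big(\inf_\mu\iint\phi_{r,\theta}^{s,d}(x-y)\,d\mu(x)\,d\mu(y)\big)^{-1}$, the infimum taken over Borel probability measures $\mu$ supported on $X$. *)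

theory Defs
  imports "HOL-Analysis.Analysis" "HOL-Probability.Probability"
begin

definition kernel_phi :: "real \<Rightarrow> real \<Rightarrow> real \<Rightarrow> real \<Rightarrow> 'a::euclidean_space \<Rightarrow> real" where
  "kernel_phi r \<theta> s d x =
     (if norm x < r then 1
      else if norm x < r powr \<theta> then (r / norm x) powr s
      else r powr (\<theta> * (d - s) + s) / norm x powr d)"

definition prob_measures_on :: "'a::euclidean_space set \<Rightarrow> 'a measure set" where
  "prob_measures_on X =
     {\<mu>. prob_space \<mu> \<and> sets \<mu> = sets borel \<and> emeasure \<mu> (UNIV - X) = 0}"

definition phi_energy :: "real \<Rightarrow> real \<Rightarrow> real \<Rightarrow> real \<Rightarrow> 'a::euclidean_space measure \<Rightarrow> ennreal" where
  "phi_energy r \<theta> s d \<mu> =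
     (\<integral>\<^sup>+ x. (\<integral>\<^sup>+ y. ennreal (kernel_phi r \<theta> s d (x - y)) \<partial>\<mu>) \<partial>\<mu>)"

definition capacity_C :: "real \<Rightarrow> real \<Rightarrow> real \<Rightarrow> 'a::euclidean_space set \<Rightarrow> real" where
  "capacity_C r \<theta> s X =
     enn2real (inverse (INF \<mu> \<in> prob_measures_on X. phi_energy r \<theta> s (real DIM('a)) \<mu>))"

end

theory Submission imports Defs begin

lemma kernel_lb:
  fixes z :: "'a::euclidean_space"
  assumes "0 < r" "r \<le> 1" "0 < \<theta>" "\<theta> \<le> 1" "0 \<le> s" "r \<le> D" "D \<le> r powr \<theta>" "norm z \<le> D"
  shows "(r / D) powr s \<le> kernel_phi r \<theta> s d z"
proof -
  have D0: "D > 0" using assms by linarith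
  consider "norm z < r" | "r \<le> norm z" "norm z < r powr \<theta>" | "r powr \<theta> \<le> norm z" by linarith
  then show ?thesis
  proof cases
    case 1
    have "(r / D) powr s \<le> 1" using assms D0
      by (intro powr_le1) (auto simp: divide_le_eq)
    then show ?thesis using 1 by (simp add: kernel_phi_def)
  next
    case 2
    have "(r / D) powr s \<le> (r / norm z) powr s"
    proof (intro powr_mono2 divide_left_mono)
      show "0 < D * norm z" using D0 2 assms(1) by (intro mult_pos_pos) auto
    qed (use assms 2 in auto)
    then show ?thesis using 2 by (simp add: kernel_phi_def)
  next
    case 3
    have zD: "norm z = r powr \<theta>" "D = r powr \<theta>" using 3 assms by linarith+
    have "r powr (\<theta> * (d - s) + s) / (r powr \<theta>) powr d = r powr (s - \<theta> * s)"
      using assms by (simp add: powr_powr powr_diff[symmetric] algebra_simps)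
    also have "\<dots> = (r / r powr \<theta>) powr s"
      using assms by (simp add: powr_divide powr_powr powr_diff algebra_simps)
    finally have e: "r powr (\<theta> * (d - s) + s) / (r powr \<theta>) powr d = (r / r powr \<theta>) powr s" .
    have "\<not> norm z < r" "\<not> norm z < r powr \<theta>" using zD assms(6) by linarith+
    then show ?thesis using e zD unfolding kernel_phi_def by simp
  qed
qed

lemma cs_lemma:
  fixes m b :: "'i \<Rightarrow> real"
  assumes "finite I" "\<And>i. i \<in> I \<Longrightarrow> b i > 0" "sum m I \<ge> 1" "\<And>i. i \<in> I \<Longrightarrow> m i \<ge> 0" "I \<noteq> {}"
  shows "1 / sum b I \<le> (\<Sum>i\<in>I. m i ^ 2 / b i)"
proof -
  define B where "B = sum b I"
  have B0: "B > 0" unfolding B_def using assms by (intro sum_pos) auto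
  define M where "M = sum m I"
  have "0 \<le> (\<Sum>i\<in>I. (m i - b i * M / B) ^ 2 / b i)"
    using assms by (intro sum_nonneg divide_nonneg_pos) auto
  also have "\<dots> = (\<Sum>i\<in>I. m i ^ 2 / b i - 2 * (M / B) * m i + (M / B)^2 * b i)"
  proof (intro sum.cong refl)
    fix i assume "i \<in> I"
    then have "b i > 0" using assms by auto
    then show "(m i - b i * M / B) ^ 2 / b i = m i ^ 2 / b i - 2 * (M / B) * m i + (M / B)^2 * b i"
      using B0 by (simp add: field_simps power2_eq_square)
  qed
  also have "\<dots> = (\<Sum>i\<in>I. m i ^ 2 / b i) - 2 * (M/B) * M + (M/B)^2 * B"
    by (simp add: sum.distrib sum_subtractf sum_distrib_left[symmetric] sum_divide_distrib[symmetric] M_def B_def)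
  also have "\<dots> = (\<Sum>i\<in>I. m i ^ 2 / b i) - M^2 / B"
    using B0 by (simp add: field_simps power2_eq_square)
  finally have "M^2 / B \<le> (\<Sum>i\<in>I. m i ^ 2 / b i)" by simp
  moreover have "1 / B \<le> M^2 / B"
    using B0 assms(3) unfolding M_def
    by (intro divide_right_mono) (auto simp: power2_eq_square intro: order_trans[of 1 "sum m I"] mult_mono[of 1 _ 1, simplified])
  ultimately show ?thesis unfolding B_def by linarith
qed

lemma energy_lb:
  fixes \<mu> :: "'a::euclidean_space measure" and A :: "'i \<Rightarrow> 'a set" and c :: "'i \<Rightarrow> real"
  assumes P: "prob_space \<mu>" and S: "sets \<mu> = sets borel" and fin: "finite I"
    and disj: "disjoint_family_on A I" and meas: "\<And>i. i \<in> I \<Longrightarrow> A i \<in> sets borel"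
    and c0: "\<And>i. i \<in> I \<Longrightarrow> c i \<ge> 0"
    and lb: "\<And>i x y. i \<in> I \<Longrightarrow> x \<in> A i \<Longrightarrow> y \<in> A i \<Longrightarrow> c i \<le> kernel_phi r \<theta> s d (x - y)"
  shows "ennreal (\<Sum>i\<in>I. c i * measure \<mu> (A i) ^ 2) \<le> phi_energy r \<theta> s d \<mu>"
proof -
  interpret prob_space \<mu> by (rule P)
  have measA: "\<And>i. i \<in> I \<Longrightarrow> A i \<in> sets \<mu>" using meas S by auto
  define g where "g x y = (\<Sum>i\<in>I. ennreal (c i) * indicator (A i) x * indicator (A i) y)" for x y
  have pt: "g x y \<le> ennreal (kernel_phi r \<theta> s d (x - y))" for x y
  proof (cases "\<exists>i\<in>I. x \<in> A i \<and> y \<in> A i")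
    case True
    then obtain i where i: "i \<in> I" "x \<in> A i" "y \<in> A i" by blast
    have "g x y = ennreal (c i) * indicator (A i) x * indicator (A i) y
        + (\<Sum>j\<in>I - {i}. ennreal (c j) * indicator (A j) x * indicator (A j) y)"
      unfolding g_def by (rule sum.remove[OF fin i(1)])
    also have "(\<Sum>j\<in>I - {i}. ennreal (c j) * indicator (A j) x * indicator (A j) y) = 0"
    proof (intro sum.neutral ballI)
      fix j assume j: "j \<in> I - {i}"
      then have "A i \<inter> A j = {}" using disj i by (auto simp: disjoint_family_on_def)
      then have "x \<notin> A j" using i by auto
      then show "ennreal (c j) * indicator (A j) x * indicator (A j) y = 0" by simp
    qed
    finally have "g x y = ennreal (c i)" using i by simp
    then show ?thesis using lb[OF i] by (simp add: ennreal_leI)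
  next
    case False
    then have "g x y = 0" unfolding g_def by (intro sum.neutral) auto
    then show ?thesis by simp
  qed
  have inner: "(\<integral>\<^sup>+ y. g x y \<partial>\<mu>) = (\<Sum>i\<in>I. ennreal (c i) * indicator (A i) x * emeasure \<mu> (A i))" for x
    unfolding g_def
    apply (subst nn_integral_sum)
    subgoal using measA by auto
    apply (intro sum.cong refl)
    apply (rule nn_integral_cmult_indicator)
    using measA by auto
  have outer: "(\<integral>\<^sup>+ x. (\<integral>\<^sup>+ y. g x y \<partial>\<mu>) \<partial>\<mu>) = (\<Sum>i\<in>I. ennreal (c i) * emeasure \<mu> (A i) * emeasure \<mu> (A i))"
    unfolding inner
    apply (subst nn_integral_sum)
    subgoal using measA by auto
  proof (intro sum.cong refl)
    fix i assume i: "i \<in> I"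
    have "(\<lambda>x. ennreal (c i) * indicator (A i) x * emeasure \<mu> (A i)) = (\<lambda>x. (ennreal (c i) * emeasure \<mu> (A i)) * indicator (A i) x)"
      by (auto simp: mult_ac)
    then show "(\<integral>\<^sup>+ x. ennreal (c i) * indicator (A i) x * emeasure \<mu> (A i) \<partial>\<mu>) = ennreal (c i) * emeasure \<mu> (A i) * emeasure \<mu> (A i)"
      using measA[OF i] by (simp add: nn_integral_cmult_indicator)
  qed
  also have "\<dots> = ennreal (\<Sum>i\<in>I. c i * measure \<mu> (A i) ^ 2)"
  proof -
    have "(\<Sum>i\<in>I. ennreal (c i) * emeasure \<mu> (A i) * emeasure \<mu> (A i)) = (\<Sum>i\<in>I. ennreal (c i * measure \<mu> (A i) ^ 2))"
      using c0 by (intro sum.cong refl) (simp add: emeasure_eq_measure ennreal_mult power2_eq_square mult.assoc)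
    also have "\<dots> = ennreal (\<Sum>i\<in>I. c i * measure \<mu> (A i) ^ 2)"
      using c0 by (intro sum_ennreal) auto
    finally show ?thesis .
  qed
  finally have eq: "ennreal (\<Sum>i\<in>I. c i * measure \<mu> (A i) ^ 2) = (\<integral>\<^sup>+ x. (\<integral>\<^sup>+ y. g x y \<partial>\<mu>) \<partial>\<mu>)" ..
  show ?thesis unfolding eq phi_energy_def
    by (intro nn_integral_mono pt)
qed

lemma inv_bound:
  fixes E :: ennreal
  assumes "ennreal q \<le> E" "q > 0"
  shows "enn2real (inverse E) \<le> 1 / q"
proof (cases E rule: ennreal_cases)
  case (real t)
  then have "q \<le> t" using assms by (simp add: ennreal_le_iff)
  then have "inverse t \<le> inverse q" using assms by (intro le_imp_inverse_le) auto
  moreover have "t > 0" using \<open>q \<le> t\<close> assms by linarith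
  ultimately show ?thesis using real by (simp add: inverse_ennreal divide_inverse)
next
  case top
  then show ?thesis using assms by simp
qed

theorem lemma5p2:
  fixes X :: "'a::euclidean_space set" and \<theta> s r :: real
    and I :: "'i set" and U :: "'i \<Rightarrow> 'a set"
  assumes "compact X"
    and "0 < \<theta>" "\<theta> \<le> 1"
    and "0 \<le> s" "s \<le> real DIM('a)"
    and "0 < r" "r \<le> 1"
    and "finite I"
    and "X \<subseteq> (\<Union>i\<in>I. U i)"
    and "\<And>i. i \<in> I \<Longrightarrow> bounded (U i)"
    and "\<And>i. i \<in> I \<Longrightarrow> r \<le> diameter (U i) \<and> diameter (U i) \<le> r powr \<theta>"
  shows "(\<Sum>i\<in>I. diameter (U i) powr s) \<ge> r powr s * capacity_C r \<theta> s X"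
proof (cases "I = {}")
  case True
  then have X: "X = {}" using assms(9) by auto
  have "prob_measures_on X = {}"
  proof (rule ccontr)
    assume "prob_measures_on X \<noteq> {}"
    then obtain \<mu> where m: "prob_space \<mu>" "sets \<mu> = sets borel" "emeasure \<mu> (UNIV - X) = 0"
      unfolding prob_measures_on_def by auto
    have "space \<mu> = UNIV" using sets_eq_imp_space_eq[OF m(2)] by simp
    then have "emeasure \<mu> (UNIV - X) = 1" using prob_space.emeasure_space_1[OF m(1)] X by simp
    then show False using m(3) by simp
  qed
  then have "capacity_C r \<theta> s X = 0" unfolding capacity_C_def by simp
  then show ?thesis using True by simp
next
  case False
  note fin = assms(8)
  define D where "D i = diameter (U i)" for i
  define V where "V i = closure (U i)" for i
  have Dr: "\<And>i. i \<in> I \<Longrightarrow> r \<le> D i \<and> D i \<le> r powr \<theta>" using assms(11) unfolding D_def by auto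
  have D0: "D i > 0" if "i \<in> I" for i using Dr[OF that] assms(6) by linarith
  define SS where "SS = (\<Sum>i\<in>I. D i powr s)"
  have Dp: "D i powr s > 0" if "i \<in> I" for i using D0[OF that] by simp
  have SS0: "SS > 0" unfolding SS_def using False fin Dp by (intro sum_pos) auto
  obtain f :: "'i \<Rightarrow> nat" and n where f: "f ` I = {i. i < n}" "inj_on f I"
    using finite_imp_inj_to_nat_seg[OF fin] by blast
  define A where "A i = V i - (\<Union>j\<in>{j\<in>I. f j < f i}. V j)" for i
  have AV: "A i \<subseteq> V i" for i unfolding A_def by auto
  have disj: "disjoint_family_on A I"
  proof (unfold disjoint_family_on_def, intro ballI impI)
    fix i j assume ij: "i \<in> I" "j \<in> I" "i \<noteq> j"
    then have "f i \<noteq> f j" using f(2) by (auto dest: inj_onD)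
    then have "f i < f j \<or> f j < f i" by linarith
    then show "A i \<inter> A j = {}"
    proof
      assume "f i < f j"
      then have "A j \<inter> V i = {}" using ij(1) unfolding A_def by blast
      then show ?thesis using AV[of i] by blast
    next
      assume "f j < f i"
      then have "A i \<inter> V j = {}" using ij(2) unfolding A_def by blast
      then show ?thesis using AV[of j] by blast
    qed
  qed
  have measA: "A i \<in> sets borel" if "i \<in> I" for i
    unfolding A_def V_def using fin by (intro sets.Diff sets.finite_UN borel_closed) auto
  have cover: "X \<subseteq> (\<Union>i\<in>I. A i)"
  proof
    fix x assume x: "x \<in> X"
    define J where "J = {i\<in>I. x \<in> V i}"
    obtain i0 where i0: "i0 \<in> I" "x \<in> U i0" using assms(9) x by (auto simp only: UN_iff subset_iff)
    have "x \<in> V i0" unfolding V_def using closure_subset i0(2) by (rule subsetD)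
    then have J: "J \<noteq> {}" unfolding J_def using i0(1) by blast
    have Jf: "finite J" unfolding J_def using fin by simp
    have "Min (f ` J) \<in> f ` J" using J Jf by (intro Min_in) auto
    then obtain i where i: "i \<in> J" "f i = Min (f ` J)" by (auto simp only: image_iff)
    have nl: "\<not> f j < f i" if "j \<in> I" "x \<in> V j" for j
    proof -
      have "j \<in> J" unfolding J_def using that by simp
      then have "Min (f ` J) \<le> f j" using Jf by simp
      then show ?thesis using i(2) by linarith
    qed
    have xi: "x \<in> V i" "i \<in> I" using i(1) unfolding J_def by simp_all
    have "x \<notin> (\<Union>j\<in>{j\<in>I. f j < f i}. V j)" using nl by blast
    then have "x \<in> A i" unfolding A_def using xi(1) by simp
    then show "x \<in> (\<Union>i\<in>I. A i)" using xi(2) by blast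
  qed
  define c where "c i = (r / D i) powr s" for i
  have energy: "ennreal (r powr s / SS) \<le> phi_energy r \<theta> s (real DIM('a)) \<mu>"
    if mu: "\<mu> \<in> prob_measures_on X" for \<mu>
  proof -
    have P: "prob_space \<mu>" and S: "sets \<mu> = sets borel" and N: "emeasure \<mu> (UNIV - X) = 0"
      using mu unfolding prob_measures_on_def by auto
    interpret prob_space \<mu> by (rule P)
    have sp: "space \<mu> = UNIV" using sets_eq_imp_space_eq[OF S] by simp
    have Xm: "X \<in> sets \<mu>" using S compact_imp_closed[OF assms(1)] by (simp add: borel_closed)
    have "prob (UNIV - X) = 0" using N by (simp add: measure_def)
    then have pX: "prob X = 1" using prob_compl[OF Xm] sp by simp
    have Am: "A i \<in> sets \<mu>" if "i \<in> I" for i using measA[OF that] S by simp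
    have "prob (\<Union>i\<in>I. A i) = (\<Sum>i\<in>I. prob (A i))"
      using fin Am disj by (intro measure_finite_Union) auto
    moreover have "prob X \<le> prob (\<Union>i\<in>I. A i)"
      using cover Am fin by (intro finite_measure_mono) auto
    ultimately have sum1: "(\<Sum>i\<in>I. prob (A i)) \<ge> 1" using pX by simp
    have lb: "c i \<le> kernel_phi r \<theta> s (real DIM('a)) (x - y)"
      if "i \<in> I" "x \<in> A i" "y \<in> A i" for i x y
    proof -
      have b: "bounded (U i)" using assms(10) that by auto
      have xy: "x \<in> V i" "y \<in> V i" using that AV by blast+
      have "bounded (V i)" unfolding V_def using b by (rule bounded_closure)
      then have "dist x y \<le> diameter (V i)" using xy by (rule diameter_bounded_bound)
      then have "norm (x - y) \<le> diameter (V i)" by (simp add: dist_norm)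
      then have "norm (x - y) \<le> D i" unfolding V_def D_def using diameter_closure[OF b] by simp
      then show ?thesis unfolding c_def
        using Dr[OF that(1)] assms(2,3,4,6,7) by (intro kernel_lb) auto
    qed
    have E: "ennreal (\<Sum>i\<in>I. c i * prob (A i) ^ 2) \<le> phi_energy r \<theta> s (real DIM('a)) \<mu>"
    proof (rule energy_lb[OF P S fin disj measA])
      fix i assume "i \<in> I" then show "c i \<ge> 0" unfolding c_def by simp
    qed (use lb in auto)
    define b where "b i = D i powr s / r powr s" for i
    have "1 / sum b I \<le> (\<Sum>i\<in>I. prob (A i) ^ 2 / b i)"
    proof (rule cs_lemma[OF fin _ sum1 _ False])
      fix i assume "i \<in> I" then show "b i > 0" unfolding b_def using Dp assms(6) by simp
    qed simp
    moreover have "sum b I = SS / r powr s" unfolding b_def SS_def by (simp add: sum_divide_distrib)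
    moreover have "(\<Sum>i\<in>I. prob (A i) ^ 2 / b i) = (\<Sum>i\<in>I. c i * prob (A i) ^ 2)"
      using D0 assms(6) by (intro sum.cong refl) (auto simp: b_def c_def powr_divide)
    ultimately have "r powr s / SS \<le> (\<Sum>i\<in>I. c i * prob (A i) ^ 2)" by simp
    then have "ennreal (r powr s / SS) \<le> ennreal (\<Sum>i\<in>I. c i * prob (A i) ^ 2)" by (rule ennreal_leI)
    then show ?thesis using E by (rule order_trans)
  qed
  have "ennreal (r powr s / SS) \<le> (INF \<mu> \<in> prob_measures_on X. phi_energy r \<theta> s (real DIM('a)) \<mu>)"
    by (intro INF_greatest energy)
  then have "capacity_C r \<theta> s X \<le> 1 / (r powr s / SS)"
    unfolding capacity_C_def using SS0 assms(6) by (intro inv_bound) auto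
  then have "r powr s * capacity_C r \<theta> s X \<le> r powr s * (1 / (r powr s / SS))"
    using assms(6) by (intro mult_left_mono) auto
  also have "\<dots> = SS" using assms(6) by simp
  finally show ?thesis unfolding SS_def D_def .
qed

end
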